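(* Let $P$ be a finite poset, let $D$ be a comparability digraph for $P$, let $\mu$ be a probability distribution on the chains of $P$ and let $\mathcal{C}_\mu$ be a random chain chosen according to $\mu$. Suppose that $\mathbb{P}(x\in \mathcal{C}_\mu)>0$ for every $x\in P$. Then for every set $S\subseteq P$, \[\mathrm{comp}(S)\geq \left({\max_{(x,y)\in E(D)}\mathbb{P}\left(y\in \mathcal{C}_\mu\mid x\in\mathcal{C}_\mu\right)}\right)^{-1}\left(|S| - \left({\min_{x\in P}\mathbb{P}\left(x\in\mathcal{C}_\mu\right)}\right)^{-1}\right).\]
   Context: A chain in a poset is a set of pairwise comparable elements. A comparability digraph for a poset $P$ is a directed graph $D$ with vertex set $P$ such that every arc $(x,y)\in E(D)$ joins comparable elements $x,y$, and for every pair of distinct comparable elements $x,y\in P$ exactly one of the arcs $(x,y)$, $(y,x)$ lies in $E(D)$ (the direction of an arc need not agree with the order). For $S\subseteq P$, $\mathrm{comp}(S)$ is the number of unordered pairs of distinct comparable elements of $S$. *)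

theory Defs
  imports "HOL-Probability.Probability"
begin

definition partial_order_on_set :: "'a set \<Rightarrow> ('a \<Rightarrow> 'a \<Rightarrow> bool) \<Rightarrow> bool" where
  "partial_order_on_set P le \<longleftrightarrow>
     (\<forall>x\<in>P. le x x) \<and>
     (\<forall>x\<in>P. \<forall>y\<in>P. le x y \<and> le y x \<longrightarrow> x = y) \<and>
     (\<forall>x\<in>P. \<forall>y\<in>P. \<forall>z\<in>P. le x y \<and> le y z \<longrightarrow> le x z)"

definition comparable :: "('a \<Rightarrow> 'a \<Rightarrow> bool) \<Rightarrow> 'a \<Rightarrow> 'a \<Rightarrow> bool" where
  "comparable le x y \<longleftrightarrow> le x y \<or> le y x"

definition is_chain :: "'a set \<Rightarrow> ('a \<Rightarrow> 'a \<Rightarrow> bool) \<Rightarrow> 'a set \<Rightarrow> bool" where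
  "is_chain P le C \<longleftrightarrow> C \<subseteq> P \<and> (\<forall>x\<in>C. \<forall>y\<in>C. comparable le x y)"

definition comparability_digraph :: "'a set \<Rightarrow> ('a \<Rightarrow> 'a \<Rightarrow> bool) \<Rightarrow> ('a \<times> 'a) set \<Rightarrow> bool" where
  "comparability_digraph P le E \<longleftrightarrow>
     (\<forall>(x,y)\<in>E. x \<in> P \<and> y \<in> P \<and> x \<noteq> y \<and> comparable le x y) \<and>
     (\<forall>x\<in>P. \<forall>y\<in>P. x \<noteq> y \<and> comparable le x y \<longrightarrow>
        (((x,y) \<in> E) \<noteq> ((y,x) \<in> E)))"

definition comp :: "('a \<Rightarrow> 'a \<Rightarrow> bool) \<Rightarrow> 'a set \<Rightarrow> nat" where
  "comp le S = card {{x, y} | x y. x \<in> S \<and> y \<in> S \<and> x \<noteq> y \<and> comparable le x y}"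

end

theory Submission
  imports Defs
begin

lemma prob_sum:
  assumes "finite (set_pmf \<mu>)"
  shows "measure_pmf.prob \<mu> X = (\<Sum>C\<in>set_pmf \<mu>. pmf \<mu> C * (if C \<in> X then 1 else 0))"
proof -
  have "measure_pmf.prob \<mu> X = measure_pmf.prob \<mu> (X \<inter> set_pmf \<mu>)"
    by (simp add: measure_Int_set_pmf)
  also have "\<dots> = sum (pmf \<mu>) (X \<inter> set_pmf \<mu>)"
    using assms by (simp add: measure_measure_pmf_finite)
  also have "\<dots> = (\<Sum>C\<in>set_pmf \<mu>. pmf \<mu> C * (if C \<in> X then 1 else 0))"
    using sum.inter_restrict[OF assms, of "pmf \<mu>" X] by (auto simp: Int_commute intro!: sum.cong)
  finally show ?thesis .
qed

lemma pw:
  fixes p :: "'a \<Rightarrow> real"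
  assumes finS: "finite S" and SP: "S \<subseteq> P"
    and D: "comparability_digraph P le E"
    and ch: "\<forall>x\<in>C. \<forall>y\<in>C. comparable le x y"
    and mpos: "m > 0" and mle: "\<forall>x\<in>P. m \<le> p x"
  shows "(\<Sum>x\<in>S. if x\<in>C then 1/p x else 0) - 1/m
     \<le> (\<Sum>a\<in>{(x,y)\<in>E. x\<in>S \<and> y\<in>S}. if fst a\<in>C \<and> snd a\<in>C then 1/p(fst a) else 0)"
proof -
  define A where "A = {(x,y)\<in>E. x\<in>S \<and> y\<in>S}"
  define f where "f = (\<lambda>x. 1 / p x)"
  define K where "K = {x\<in>S. x\<in>C}"
  define B where "B = {a\<in>A. fst a\<in>C \<and> snd a\<in>C}"
  have finA: "finite A" unfolding A_def
    by (rule finite_subset[of _ "S \<times> S"]) (auto simp: finS)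
  have finB: "finite B" unfolding B_def using finA by simp
  have finK: "finite K" unfolding K_def using finS by simp
  have fpos: "x \<in> P \<Longrightarrow> 0 \<le> f x" for x using mle mpos unfolding f_def
    by (metis dual_order.trans less_le_not_le zero_le_divide_1_iff)
  have fle: "x \<in> P \<Longrightarrow> f x \<le> 1/m" for x using mle mpos unfolding f_def
    by (simp add: frac_le)
  have r1: "(\<Sum>a\<in>A. if fst a\<in>C \<and> snd a\<in>C then 1/p(fst a) else 0) = (\<Sum>a\<in>B. f (fst a))"
    unfolding B_def f_def using finA by (simp add: sum.inter_filter)
  have r2: "(\<Sum>x\<in>S. if x\<in>C then 1/p x else 0) = (\<Sum>x\<in>K. f x)"
    unfolding K_def f_def using finS by (simp add: sum.inter_filter)
  define Z where "Z = {x\<in>K. \<forall>y\<in>K. (x,y)\<notin>E}"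
  have ZK: "Z \<subseteq> K" unfolding Z_def by auto
  have Zuniq: "z1 = z2" if "z1 \<in> Z" "z2 \<in> Z" for z1 z2
  proof (rule ccontr)
    assume ne: "z1 \<noteq> z2"
    have "z1 \<in> P" "z2 \<in> P" "z1 \<in> C" "z2 \<in> C" using that SP unfolding Z_def K_def by auto
    then have "comparable le z1 z2" using ch by auto
    then have "(z1,z2) \<in> E \<or> (z2,z1) \<in> E" using D ne \<open>z1 \<in> P\<close> \<open>z2 \<in> P\<close>
      unfolding comparability_digraph_def by blast
    then show False using that unfolding Z_def by auto
  qed
  have sZ: "(\<Sum>x\<in>Z. f x) \<le> 1/m"
  proof (cases "Z = {}")
    case True then show ?thesis using mpos by simp
  next
    case False
    then obtain z where z: "z \<in> Z" by auto
    then have "Z = {z}" using Zuniq by auto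
    moreover have "z \<in> P" using z ZK SP unfolding K_def by auto
    ultimately show ?thesis using fle by simp
  qed
  have KZ: "K - Z \<subseteq> fst ` B"
  proof
    fix x assume x: "x \<in> K - Z"
    then obtain y where y: "y \<in> K" "(x,y) \<in> E" unfolding Z_def by auto
    then have "(x,y) \<in> B" using x unfolding B_def A_def K_def by auto
    then show "x \<in> fst ` B" by force
  qed
  have fstB: "fst ` B \<subseteq> P" unfolding B_def A_def using SP by auto
  have "(\<Sum>x\<in>K - Z. f x) \<le> (\<Sum>x\<in>fst ` B. f x)"
    by (rule sum_mono2) (use finB KZ fstB fpos in auto)
  also have "\<dots> \<le> (\<Sum>a\<in>B. f (fst a))"
    using sum_image_le[OF finB, of f fst] fstB fpos by (auto simp: o_def)
  finally have "(\<Sum>x\<in>K - Z. f x) \<le> (\<Sum>a\<in>B. f (fst a))" .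
  moreover have "(\<Sum>x\<in>K. f x) = (\<Sum>x\<in>K - Z. f x) + (\<Sum>x\<in>Z. f x)"
    using sum.subset_diff[OF ZK finK] by simp
  ultimately show ?thesis using r1 r2 sZ unfolding A_def by linarith
qed

theorem mainTheorem7:
  fixes P :: "'a set" and le :: "'a \<Rightarrow> 'a \<Rightarrow> bool" and E :: "('a \<times> 'a) set"
    and \<mu> :: "'a set pmf" and S :: "'a set"
  assumes finP: "finite P"
    and po: "partial_order_on_set P le"
    and D: "comparability_digraph P le E"
    and chains: "\<forall>C\<in>set_pmf \<mu>. is_chain P le C"
    and pos: "\<forall>x\<in>P. measure_pmf.prob \<mu> {C. x \<in> C} > 0"
    and SP: "S \<subseteq> P"
  shows "let p = (\<lambda>x. measure_pmf.prob \<mu> {C. x \<in> C});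
             cond = (\<lambda>(x, y). measure_pmf.prob \<mu> {C. x \<in> C \<and> y \<in> C} / p x);
             M = (if E = {} then 0 else Max (cond ` E));
             m = Min (p ` P)
         in real (comp le S) \<ge> (1 / M) * (real (card S) - 1 / m)"
proof -
  define p where "p = (\<lambda>x. measure_pmf.prob \<mu> {C. x \<in> C})"
  define cond where "cond = (\<lambda>(x, y). measure_pmf.prob \<mu> {C. x \<in> C \<and> y \<in> C} / p x)"
  define M where "M = (if E = {} then 0 else Max (cond ` E))"
  define m where "m = Min (p ` P)"
  have EP: "E \<subseteq> P \<times> P" using D unfolding comparability_digraph_def by auto
  have finE: "finite E" using finite_subset[OF EP] finP by auto
  have finS: "finite S" using finite_subset[OF SP finP] .
  have main: "real (comp le S) \<ge> (1 / M) * (real (card S) - 1 / m)"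
  proof (cases "P = {}")
    case True
    then have "E = {}" using EP by auto
    then show ?thesis unfolding M_def by simp
  next
    case Pne: False
    define T where "T = set_pmf \<mu>"
    have TP: "T \<subseteq> Pow P" using chains unfolding T_def is_chain_def by auto
    have finT: "finite T" using finite_subset[OF TP] finP by auto
    define w where "w = pmf \<mu>"
    have w0: "0 \<le> w C" for C unfolding w_def by simp
    have w1: "(\<Sum>C\<in>T. w C) = 1" unfolding w_def T_def
      using finT sum_pmf_eq_1[of "set_pmf \<mu>" \<mu>] unfolding T_def by simp
    have psum: "measure_pmf.prob \<mu> X = (\<Sum>C\<in>T. w C * (if C \<in> X then 1 else 0))" for X
      using prob_sum[of \<mu> X] finT unfolding T_def w_def by simp
    have mpos: "m > 0" unfolding m_def using finP Pne pos by (simp add: p_def)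
    have mle: "\<forall>x\<in>P. m \<le> p x" unfolding m_def using finP by simp
    have ppos: "x \<in> P \<Longrightarrow> p x > 0" for x using pos p_def by simp
    define A where "A = {(x,y)\<in>E. x\<in>S \<and> y\<in>S}"
    have finA: "finite A" unfolding A_def by (rule finite_subset[of _ E]) (auto simp: finE)
    define g where "g = (\<lambda>a C. if fst a\<in>C \<and> snd a\<in>C then 1/p(fst a) else (0::real))"
    define h where "h = (\<lambda>x C. if x\<in>C then 1/p x else (0::real))"
    have condA: "cond a = (\<Sum>C\<in>T. w C * g a C)" if "a \<in> A" for a
    proof -
      obtain x y where a: "a = (x,y)" by force
      have "cond a = (\<Sum>C\<in>T. w C * (if C \<in> {C. x \<in> C \<and> y \<in> C} then 1 else 0)) / p x"
        unfolding a cond_def using psum by simp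
      also have "\<dots> = (\<Sum>C\<in>T. w C * g a C)"
        unfolding g_def a by (auto simp: sum_divide_distrib intro!: sum.cong)
      finally show ?thesis .
    qed
    have cardS: "real (card S) = (\<Sum>x\<in>S. \<Sum>C\<in>T. w C * h x C)"
    proof -
      have "real (card S) = (\<Sum>x\<in>S. 1)" by simp
      also have "\<dots> = (\<Sum>x\<in>S. p x / p x)"
        by (rule sum.cong[OF refl]) (use SP ppos in \<open>(metis less_irrefl subsetD divide_self)\<close>)
      also have "\<dots> = (\<Sum>x\<in>S. \<Sum>C\<in>T. w C * h x C)"
      proof (rule sum.cong[OF refl])
        fix x
        have eq: "p x = (\<Sum>C\<in>T. w C * (if x \<in> C then 1 else 0))" by (simp add: p_def psum)
        have "p x / p x = (\<Sum>C\<in>T. w C * (if x \<in> C then 1 else 0)) / p x"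
          using eq by simp
        also have "\<dots> = (\<Sum>C\<in>T. w C * h x C)"
          unfolding h_def sum_divide_distrib by (auto intro!: sum.cong)
        finally show "p x / p x = (\<Sum>C\<in>T. w C * h x C)" .
      qed
      finally show ?thesis .
    qed
    define X where "X = (\<Sum>a\<in>A. cond a)"
    have Xeq: "X = (\<Sum>C\<in>T. w C * (\<Sum>a\<in>A. g a C))"
      unfolding X_def using condA by (simp add: sum_distrib_left sum.swap[of _ T A])
    have w1m: "(\<Sum>C\<in>T. w C / m) = 1/m" using w1 by (simp flip: sum_divide_distrib)
    have Seq: "real (card S) - 1/m = (\<Sum>C\<in>T. w C * ((\<Sum>x\<in>S. h x C) - 1/m))"
      unfolding cardS using w1 w1m
      by (simp add: sum_distrib_left sum.swap[of _ T S] right_diff_distrib sum_subtractf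
            flip: sum_distrib_right)
    have Xge: "real (card S) - 1/m \<le> X"
      unfolding Seq Xeq
    proof (rule sum_mono)
      fix C assume C: "C \<in> T"
      have ch: "\<forall>x\<in>C. \<forall>y\<in>C. comparable le x y" using chains C unfolding T_def is_chain_def by auto
      have "(\<Sum>x\<in>S. h x C) - 1/m \<le> (\<Sum>a\<in>A. g a C)"
        using pw[OF finS SP D ch mpos mle] unfolding A_def g_def h_def by simp
      then show "w C * ((\<Sum>x\<in>S. h x C) - 1/m) \<le> w C * (\<Sum>a\<in>A. g a C)"
        using w0 by (simp add: mult_left_mono)
    qed
    have cond0: "cond a \<ge> 0" for a by (auto simp: cond_def p_def split: prod.splits)
    show ?thesis
    proof (cases "E = {}")
      case True then show ?thesis unfolding M_def by simp
    next
      case Ene: False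
      have Mge: "a \<in> E \<Longrightarrow> cond a \<le> M" for a unfolding M_def using Ene finE by simp
      have M0: "M \<ge> 0" using Ene Mge cond0 by (meson ex_in_conv order.trans)
      have "X \<le> (\<Sum>a\<in>A. M)" unfolding X_def by (rule sum_mono) (use Mge A_def in auto)
      also have "\<dots> = M * card A" by simp
      also have "\<dots> \<le> M * comp le S"
      proof -
        define Q where "Q = {{x, y} | x y. x \<in> S \<and> y \<in> S \<and> x \<noteq> y \<and> comparable le x y}"
        have inj: "inj_on (\<lambda>(x,y). {x,y}) A"
        proof (rule inj_onI)
          fix a b assume a: "a \<in> A" and b: "b \<in> A" and eq: "(\<lambda>(x,y). {x,y}) a = (\<lambda>(x,y). {x,y}) b"
          obtain x y u v where ab: "a = (x,y)" "b = (u,v)" by force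
          have "x \<in> P" "y \<in> P" "x \<noteq> y" "comparable le x y" "(x,y)\<in>E" "(u,v)\<in>E"
            using a b D SP unfolding ab A_def comparability_digraph_def by auto
          moreover have "{x,y} = {u,v}" using eq ab by simp
          ultimately show "a = b" unfolding ab using D unfolding comparability_digraph_def
            by (metis doubleton_eq_iff)
        qed
        have sub: "(\<lambda>(x,y). {x,y}) ` A \<subseteq> Q"
          unfolding Q_def A_def using D unfolding comparability_digraph_def by fastforce
        have finQ: "finite Q"
          by (rule finite_subset[of _ "Pow S"]) (auto simp: Q_def finS)
        have "card A \<le> card Q"
          using card_inj_on_le[OF inj sub finQ] .
        then have "real (card A) \<le> real (comp le S)" unfolding comp_def Q_def by simp
        then show ?thesis using M0 by (simp add: mult_left_mono)
      qed
      finally have XM: "X \<le> M * comp le S" .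
      show ?thesis
      proof (cases "M = 0")
        case True then show ?thesis by simp
      next
        case False
        then have "M > 0" using M0 by simp
        then have "(1/M) * (real (card S) - 1/m) \<le> (1/M) * (M * comp le S)"
          using Xge XM by (intro mult_left_mono) auto
        then show ?thesis using \<open>M > 0\<close> by simp
      qed
    qed
  qed
  then show ?thesis unfolding Let_def p_def cond_def M_def m_def by simp
qed

end
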